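(* Let $\Gamma$ be a strict finite normal-form game (any number of players, each having at least $2$ strategies) whose preference graph has no sink and no directed cycle of length $4$. Then $\Gamma$ has at least $8$ strategy profiles. Moreover, if $\Gamma$ has exactly $8$ profiles, then $\Gamma$ is a $2\times2\times2$ game and its preference graph is isomorphic (equivalently, equal up to renaming strategies and players) to Jordan's graph.
   Context: A finite normal-form game has players $1,\dots,N$, finite strategy sets $S_1,\dots,S_N$ and utilities $u_i:\prod_j S_j\to\mathbb{R}$; profiles are elements of $Z=\prod_j S_j$. Two distinct profiles are $i$-comparable if they differ only in player $i$'s strategy. The preference graph has node set $Z$ and an arc $p\to q$ between $i$-comparable profiles whenever $u_i(q)\ge u_i(p)$. A game is strict if $u_i(p)\ne u_i(q)$ for all $i$-comparable $p,q$ and all $i$. Jordan's graph ("Mismatching Pennies") is the preference graph of the three-player game with $S_1=S_2=S_3=\{0,1\}$ in which player $i$ receives payoff $1$ if $s_i\ne s_{i-1}$ and $0$ otherwise (indices mod $3$, so player 1 compares with player 3); i.e. for each $i$ there is an arc from the profile with $s_i=s_{i-1}$ to the $i$-comparable profile with $s_i\neq s_{i-1}$. *)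

theory Defs
  imports Complex_Main
begin

text \<open>A finite normal-form game with players 0,...,N-1 (player i of the paper is index i-1),
strategy sets S i and utilities u i. Profiles are lists of length N.\<close>

definition profiles :: "nat \<Rightarrow> (nat \<Rightarrow> 'a set) \<Rightarrow> 'a list set" where
  "profiles N S = {p. length p = N \<and> (\<forall>i<N. p ! i \<in> S i)}"

definition comparable :: "nat \<Rightarrow> (nat \<Rightarrow> 'a set) \<Rightarrow> nat \<Rightarrow> 'a list \<Rightarrow> 'a list \<Rightarrow> bool" where
  "comparable N S i p q \<longleftrightarrow> i < N \<and> p \<in> profiles N S \<and> q \<in> profiles N S \<and> p \<noteq> q \<and>
     (\<forall>j<N. j \<noteq> i \<longrightarrow> p ! j = q ! j)"

definition pref_arc :: "nat \<Rightarrow> (nat \<Rightarrow> 'a set) \<Rightarrow> (nat \<Rightarrow> 'a list \<Rightarrow> real) \<Rightarrow> 'a list \<Rightarrow> 'a list \<Rightarrow> bool" where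
  "pref_arc N S u p q \<longleftrightarrow> (\<exists>i. comparable N S i p q \<and> u i q \<ge> u i p)"

definition strict_game :: "nat \<Rightarrow> (nat \<Rightarrow> 'a set) \<Rightarrow> (nat \<Rightarrow> 'a list \<Rightarrow> real) \<Rightarrow> bool" where
  "strict_game N S u \<longleftrightarrow> (\<forall>i p q. comparable N S i p q \<longrightarrow> u i p \<noteq> u i q)"

definition has_sink :: "nat \<Rightarrow> (nat \<Rightarrow> 'a set) \<Rightarrow> (nat \<Rightarrow> 'a list \<Rightarrow> real) \<Rightarrow> bool" where
  "has_sink N S u \<longleftrightarrow> (\<exists>p \<in> profiles N S. \<not> (\<exists>q. pref_arc N S u p q))"

definition has_4cycle :: "nat \<Rightarrow> (nat \<Rightarrow> 'a set) \<Rightarrow> (nat \<Rightarrow> 'a list \<Rightarrow> real) \<Rightarrow> bool" where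
  "has_4cycle N S u \<longleftrightarrow> (\<exists>a b c d. distinct [a, b, c, d] \<and>
     pref_arc N S u a b \<and> pref_arc N S u b c \<and> pref_arc N S u c d \<and> pref_arc N S u d a)"

text \<open>Mismatching Pennies: players 0,1,2, strategies bool; player i gets 1 iff
  s_i differs from s_{i-1 mod 3}.\<close>
definition jordan_S :: "nat \<Rightarrow> bool set" where
  "jordan_S i = UNIV"

definition jordan_u :: "nat \<Rightarrow> bool list \<Rightarrow> real" where
  "jordan_u i s = (if s ! i \<noteq> s ! ((i + 2) mod 3) then 1 else 0)"

definition iso_to_jordan :: "nat \<Rightarrow> (nat \<Rightarrow> 'a set) \<Rightarrow> (nat \<Rightarrow> 'a list \<Rightarrow> real) \<Rightarrow> bool" where
  "iso_to_jordan N S u \<longleftrightarrow> (\<exists>f. bij_betw f (profiles N S) (profiles 3 jordan_S) \<and>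
     (\<forall>p \<in> profiles N S. \<forall>q \<in> profiles N S.
        pref_arc N S u p q \<longleftrightarrow> pref_arc 3 jordan_S jordan_u (f p) (f q)))"

end

theory Submission imports Defs "HOL-Library.FuncSet" begin

lemma comp_sym: "comparable N S i p q \<Longrightarrow> comparable N S i q p"
  by (auto simp: comparable_def)

lemma comp_idx: assumes "comparable N S i p q" "comparable N S j p q" shows "i = j"
proof -
  from assms(1) have l: "length p = N" "length q = N" "p \<noteq> q"
    by (auto simp: comparable_def profiles_def)
  then obtain k where k: "k < N" "p ! k \<noteq> q ! k"
    using nth_equalityI by metis
  with assms show ?thesis by (auto simp: comparable_def)
qed

lemma arc_gt: assumes "strict_game N S u" "comparable N S i p q"
  shows "pref_arc N S u p q \<longleftrightarrow> u i q > u i p"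
proof
  assume "pref_arc N S u p q"
  then obtain i' where "comparable N S i' p q" "u i' q \<ge> u i' p" by (auto simp: pref_arc_def)
  moreover have "i' = i" using comp_idx[OF calculation(1) assms(2)] .
  ultimately show "u i q > u i p" using assms(1) assms(2) unfolding strict_game_def
    by (metis order_le_less)
next
  assume "u i q > u i p" then show "pref_arc N S u p q" using assms(2) by (auto simp: pref_arc_def)
qed

lemma arc_comp: "pref_arc N S u p q \<Longrightarrow> \<exists>i. comparable N S i p q"
  by (auto simp: pref_arc_def)

lemma arc_anti: assumes "strict_game N S u" "pref_arc N S u p q" shows "\<not> pref_arc N S u q p"
proof -
  obtain i where c: "comparable N S i p q" using arc_comp[OF assms(2)] by blast
  show ?thesis using arc_gt[OF assms(1) c] arc_gt[OF assms(1) comp_sym[OF c]] assms(2) by auto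
qed

lemma profiles_card: assumes "\<forall>i<N. finite (S i)"
  shows "finite (profiles N S) \<and> card (profiles N S) = (\<Prod>i<N. card (S i))"
proof -
  have b: "bij_betw (\<lambda>p. restrict ((!) p) {..<N}) (profiles N S) (PiE {..<N} S)"
  proof (rule bij_betwI')
    fix p q assume "p \<in> profiles N S" "q \<in> profiles N S"
    then show "(restrict ((!) p) {..<N} = restrict ((!) q) {..<N}) = (p = q)"
      apply (auto simp: profiles_def intro!: nth_equalityI)
      by (metis lessThan_iff restrict_apply')
  next
    fix p assume "p \<in> profiles N S" then show "restrict ((!) p) {..<N} \<in> PiE {..<N} S"
      by (auto simp: profiles_def)
  next
    fix f assume f: "f \<in> PiE {..<N} S"
    show "\<exists>p\<in>profiles N S. f = restrict ((!) p) {..<N}"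
    proof (intro bexI[of _ "map f [0..<N]"])
      show "map f [0..<N] \<in> profiles N S" using f by (auto simp: profiles_def)
      show "f = restrict ((!) (map f [0..<N])) {..<N}" using f
        by (auto simp: PiE_def extensional_def)
    qed
  qed
  have "finite (PiE {..<N} S)" using assms by (auto intro: finite_PiE)
  moreover have "card (PiE {..<N} S) = (\<Prod>i<N. card (S i))" by (simp add: card_PiE)
  ultimately show ?thesis using b bij_betw_finite bij_betw_same_card by metis
qed


lemma two_by_m:
  assumes st: "strict_game 2 S u" and ns: "\<not> has_sink 2 S u"
    and fin: "finite (profiles 2 S)"
    and Sk: "S k = {a, b}" and ab: "a \<noteq> b" and kj: "k < 2" "j < 2" "k \<noteq> j"
    and Sj: "S j \<noteq> {}"
  shows "has_4cycle 2 S u"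
proof -
  let ?P = "profiles 2 S"
  have ij: "\<And>i. i < 2 \<Longrightarrow> i = k \<or> i = j" using kj by auto
  have eq2: "\<And>p q. p \<in> ?P \<Longrightarrow> q \<in> ?P \<Longrightarrow> p ! k = q ! k \<Longrightarrow> p ! j = q ! j \<Longrightarrow> p = q"
    by (auto simp: profiles_def intro!: nth_equalityI dest: ij)
  have compj: "\<And>p q. p \<in> ?P \<Longrightarrow> q \<in> ?P \<Longrightarrow> p \<noteq> q \<Longrightarrow> p ! k = q ! k \<Longrightarrow> comparable 2 S j p q"
    using kj by (auto simp: comparable_def dest: ij)
  have compjD: "\<And>p q. comparable 2 S j p q \<Longrightarrow> p ! k = q ! k"
    using kj by (auto simp: comparable_def)
  have compkD: "\<And>p q. comparable 2 S k p q \<Longrightarrow> p ! j = q ! j"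
    using kj by (auto simp: comparable_def)
  have compP: "\<And>i p q. comparable 2 S i p q \<Longrightarrow> i < 2 \<and> p \<in> ?P \<and> q \<in> ?P \<and> p \<noteq> q"
    by (auto simp: comparable_def)
  obtain y where y: "y \<in> S j" using Sj by auto
  define Row where "Row x = {p \<in> ?P. p ! k = x}" for x
  have rowne: "Row x \<noteq> {}" if "x \<in> S k" for x
  proof -
    let ?w = "if k = 0 then [x, y] else [y, x]"
    have "?w \<in> Row x" using kj that y by (auto simp: Row_def profiles_def less_2_cases_iff)
    then show ?thesis by auto
  qed
  have rowfin: "finite (Row x)" for x using fin by (auto simp: Row_def)
  have maxex: "\<exists>p\<in>Row x. \<forall>q\<in>Row x. u j q \<le> u j p" if "x \<in> S k" for x
  proof -
    let ?m = "Max (u j ` Row x)"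
    have "?m \<in> u j ` Row x" using rowne[OF that] rowfin by (auto intro: Max_in)
    then obtain p where "p \<in> Row x" "u j p = ?m" by auto
    then show ?thesis using rowfin by (auto intro!: bexI[of _ p] Max_ge)
  qed
  have toMax: "pref_arc 2 S u q p" if "p \<in> Row x" "\<forall>q\<in>Row x. u j q \<le> u j p" "q \<in> Row x" "q \<noteq> p" for p q x
    using that compj[of q p] by (auto simp: pref_arc_def Row_def)
  have step: "\<exists>q. q \<in> ?P \<and> q ! k = y' \<and> q ! j = p ! j \<and> pref_arc 2 S u p q"
    if xy: "x \<in> {a,b}" "y' \<in> {a,b}" "x \<noteq> y'" and pm: "p \<in> Row x" "\<forall>q\<in>Row x. u j q \<le> u j p" for x y' p
  proof -
    have pP: "p \<in> ?P" using pm by (auto simp: Row_def)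
    then obtain q where arc: "pref_arc 2 S u p q" using ns by (auto simp: has_sink_def)
    then obtain i where c: "comparable 2 S i p q" using arc_comp by blast
    have gt: "u i q > u i p" using arc_gt[OF st c] arc by simp
    have qP: "q \<in> ?P" "i < 2" "p \<noteq> q" using compP[OF c] by auto
    have "i \<noteq> j"
    proof
      assume "i = j"
      then have "q \<in> Row x" using compjD c pm by (auto simp: Row_def qP)
      then show False using pm gt \<open>i = j\<close> by force
    qed
    then have "i = k" using ij qP by blast
    then have qj: "q ! j = p ! j" using compkD[of p q] c by simp
    have "q ! k \<in> S k" using qP kj by (auto simp: profiles_def)
    moreover have "q ! k \<noteq> x" using eq2[OF pP qP(1)] qj qP pm by (auto simp: Row_def)
    ultimately have "q ! k = y'" using Sk xy by auto
    then show ?thesis using qP qj arc by blast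
  qed
  have aS: "a \<in> S k" "b \<in> S k" using Sk by auto
  obtain pa where pa: "pa \<in> Row a" "\<forall>q\<in>Row a. u j q \<le> u j pa" using maxex[OF aS(1)] by blast
  obtain pb where pb: "pb \<in> Row b" "\<forall>q\<in>Row b. u j q \<le> u j pb" using maxex[OF aS(2)] by blast
  obtain q1 where q1: "q1 \<in> ?P" "q1 ! k = b" "q1 ! j = pa ! j" "pref_arc 2 S u pa q1"
    using step[of a b pa] pa ab by auto
  obtain q2 where q2: "q2 \<in> ?P" "q2 ! k = a" "q2 ! j = pb ! j" "pref_arc 2 S u pb q2"
    using step[of b a pb] pb ab by auto
  have paP: "pa \<in> ?P" "pa ! k = a" using pa by (auto simp: Row_def)
  have pbP: "pb \<in> ?P" "pb ! k = b" using pb by (auto simp: Row_def)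
  have iff: "q1 = pb \<longleftrightarrow> q2 = pa"
  proof
    assume "q1 = pb" then show "q2 = pa" using eq2[OF q2(1) paP(1)] q1 q2 paP by auto
  next
    assume "q2 = pa" then show "q1 = pb" using eq2[OF q1(1) pbP(1)] q1 q2 pbP by auto
  qed
  have ne1: "q1 \<noteq> pb"
  proof
    assume h: "q1 = pb"
    then have "q2 = pa" using iff by simp
    then show False using arc_anti[OF st q1(4)] q2(4) h by simp
  qed
  then have ne2: "q2 \<noteq> pa" using iff by simp
  have a1: "pref_arc 2 S u q1 pb" using toMax[OF pb] q1 ne1 by (auto simp: Row_def)
  have a2: "pref_arc 2 S u q2 pa" using toMax[OF pa] q2 ne2 by (auto simp: Row_def)
  have "distinct [pa, q1, pb, q2]" using paP pbP q1 q2 ne1 ne2 ab by auto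
  then show ?thesis unfolding has_4cycle_def using q1(4) a1 q2(4) a2 by blast
qed


lemma ex_less_3: "(\<exists>i<(3::nat). P i) \<longleftrightarrow> P 0 \<or> P 1 \<or> P 2"
  by (auto simp: numeral_3_eq_3 numeral_2_eq_2 less_Suc_eq)
lemma all_less_3: "(\<forall>i<(3::nat). P i) \<longleftrightarrow> P 0 \<and> P 1 \<and> P 2"
  by (auto simp: numeral_3_eq_3 numeral_2_eq_2 less_Suc_eq)
lemma comp_eq: "comparable 3 jordan_S i s t \<longleftrightarrow> i < 3 \<and> length s = 3 \<and> length t = 3 \<and> s \<noteq> t \<and> (\<forall>j<3. j \<noteq> i \<longrightarrow> s!j = t!j)"
  by (auto simp: comparable_def profiles_def jordan_S_def)
lemma J_eq: "pref_arc 3 jordan_S jordan_u s t \<longleftrightarrow> (\<exists>i<3. comparable 3 jordan_S i s t \<and> jordan_u i t \<ge> jordan_u i s)"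
  by (auto simp: pref_arc_def comparable_def)
lemma "pref_arc 3 jordan_S jordan_u [True,True,True] [True,False,True]"
  by (simp add: J_eq comp_eq ex_less_3 all_less_3 jordan_u_def)
lemma "\<not> pref_arc 3 jordan_S jordan_u [True,False,True] [True,True,True]"
  by (simp add: J_eq comp_eq ex_less_3 all_less_3 jordan_u_def)

lemma len3: "length (s::bool list) = 3 \<longleftrightarrow> (s = [False, False, False] \<or> s = [False, False, True] \<or> s = [False, True, False] \<or> s = [False, True, True] \<or> s = [True, False, False] \<or> s = [True, False, True] \<or> s = [True, True, False] \<or> s = [True, True, True])"
proof
  assume "length s = 3"
  then obtain a b c where "s = [a,b,c]" by (auto simp: length_Suc_conv numeral_3_eq_3)
  then show "s = [False, False, False] \<or> s = [False, False, True] \<or> s = [False, True, False] \<or> s = [False, True, True] \<or> s = [True, False, False] \<or> s = [True, False, True] \<or> s = [True, True, False] \<or> s = [True, True, True]" by (cases a; cases b; cases c) auto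
qed auto

lemma P3: "profiles 3 jordan_S = {[False, False, False], [False, False, True], [False, True, False], [False, True, True], [True, False, False], [True, False, True], [True, True, False], [True, True, True]}"
  by (auto simp: profiles_def jordan_S_def len3)

lemma cube_lemma:
  fixes R :: "bool list \<Rightarrow> bool list \<Rightarrow> bool"
  assumes arcC: "\<And>s t. length s = 3 \<Longrightarrow> length t = 3 \<Longrightarrow> R s t \<Longrightarrow> \<exists>i. comparable 3 jordan_S i s t"
    and anti: "\<And>s t. length s = 3 \<Longrightarrow> length t = 3 \<Longrightarrow> R s t \<Longrightarrow> \<not> R t s"
    and tot: "\<And>s t i. comparable 3 jordan_S i s t \<Longrightarrow> R s t \<or> R t s"
    and nosink: "\<And>s. length s = 3 \<Longrightarrow> \<exists>t. length t = 3 \<and> R s t"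
    and no4: "\<And>a b c d. distinct [a,b,c,d] \<Longrightarrow> length a = 3 \<Longrightarrow> length b = 3 \<Longrightarrow> length c = 3 \<Longrightarrow> length d = 3 \<Longrightarrow>
       R a b \<Longrightarrow> R b c \<Longrightarrow> R c d \<Longrightarrow> R d a \<Longrightarrow> False"
  shows "\<exists>g. bij_betw g (profiles 3 jordan_S) (profiles 3 jordan_S) \<and>
    (\<forall>s\<in>profiles 3 jordan_S. \<forall>t\<in>profiles 3 jordan_S. R s t \<longleftrightarrow> pref_arc 3 jordan_S jordan_u (g s) (g t))"
proof -
  have na0: "\<not> R [False, False, False] [False, False, False]"
    using arcC[of "[False, False, False]" "[False, False, False]"] by (auto simp: comp_eq ex_less_3 all_less_3)
  have na1: "\<not> R [False, False, False] [False, True, True]"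
    using arcC[of "[False, False, False]" "[False, True, True]"] by (auto simp: comp_eq ex_less_3 all_less_3)
  have na2: "\<not> R [False, False, False] [True, False, True]"
    using arcC[of "[False, False, False]" "[True, False, True]"] by (auto simp: comp_eq ex_less_3 all_less_3)
  have na3: "\<not> R [False, False, False] [True, True, False]"
    using arcC[of "[False, False, False]" "[True, True, False]"] by (auto simp: comp_eq ex_less_3 all_less_3)
  have na4: "\<not> R [False, False, False] [True, True, True]"
    using arcC[of "[False, False, False]" "[True, True, True]"] by (auto simp: comp_eq ex_less_3 all_less_3)
  have na5: "\<not> R [False, False, True] [False, False, True]"
    using arcC[of "[False, False, True]" "[False, False, True]"] by (auto simp: comp_eq ex_less_3 all_less_3)
  have na6: "\<not> R [False, False, True] [False, True, False]"
    using arcC[of "[False, False, True]" "[False, True, False]"] by (auto simp: comp_eq ex_less_3 all_less_3)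
  have na7: "\<not> R [False, False, True] [True, False, False]"
    using arcC[of "[False, False, True]" "[True, False, False]"] by (auto simp: comp_eq ex_less_3 all_less_3)
  have na8: "\<not> R [False, False, True] [True, True, False]"
    using arcC[of "[False, False, True]" "[True, True, False]"] by (auto simp: comp_eq ex_less_3 all_less_3)
  have na9: "\<not> R [False, False, True] [True, True, True]"
    using arcC[of "[False, False, True]" "[True, True, True]"] by (auto simp: comp_eq ex_less_3 all_less_3)
  have na10: "\<not> R [False, True, False] [False, False, True]"
    using arcC[of "[False, True, False]" "[False, False, True]"] by (auto simp: comp_eq ex_less_3 all_less_3)
  have na11: "\<not> R [False, True, False] [False, True, False]"
    using arcC[of "[False, True, False]" "[False, True, False]"] by (auto simp: comp_eq ex_less_3 all_less_3)
  have na12: "\<not> R [False, True, False] [True, False, False]"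
    using arcC[of "[False, True, False]" "[True, False, False]"] by (auto simp: comp_eq ex_less_3 all_less_3)
  have na13: "\<not> R [False, True, False] [True, False, True]"
    using arcC[of "[False, True, False]" "[True, False, True]"] by (auto simp: comp_eq ex_less_3 all_less_3)
  have na14: "\<not> R [False, True, False] [True, True, True]"
    using arcC[of "[False, True, False]" "[True, True, True]"] by (auto simp: comp_eq ex_less_3 all_less_3)
  have na15: "\<not> R [False, True, True] [False, False, False]"
    using arcC[of "[False, True, True]" "[False, False, False]"] by (auto simp: comp_eq ex_less_3 all_less_3)
  have na16: "\<not> R [False, True, True] [False, True, True]"
    using arcC[of "[False, True, True]" "[False, True, True]"] by (auto simp: comp_eq ex_less_3 all_less_3)
  have na17: "\<not> R [False, True, True] [True, False, False]"
    using arcC[of "[False, True, True]" "[True, False, False]"] by (auto simp: comp_eq ex_less_3 all_less_3)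
  have na18: "\<not> R [False, True, True] [True, False, True]"
    using arcC[of "[False, True, True]" "[True, False, True]"] by (auto simp: comp_eq ex_less_3 all_less_3)
  have na19: "\<not> R [False, True, True] [True, True, False]"
    using arcC[of "[False, True, True]" "[True, True, False]"] by (auto simp: comp_eq ex_less_3 all_less_3)
  have na20: "\<not> R [True, False, False] [False, False, True]"
    using arcC[of "[True, False, False]" "[False, False, True]"] by (auto simp: comp_eq ex_less_3 all_less_3)
  have na21: "\<not> R [True, False, False] [False, True, False]"
    using arcC[of "[True, False, False]" "[False, True, False]"] by (auto simp: comp_eq ex_less_3 all_less_3)
  have na22: "\<not> R [True, False, False] [False, True, True]"
    using arcC[of "[True, False, False]" "[False, True, True]"] by (auto simp: comp_eq ex_less_3 all_less_3)
  have na23: "\<not> R [True, False, False] [True, False, False]"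
    using arcC[of "[True, False, False]" "[True, False, False]"] by (auto simp: comp_eq ex_less_3 all_less_3)
  have na24: "\<not> R [True, False, False] [True, True, True]"
    using arcC[of "[True, False, False]" "[True, True, True]"] by (auto simp: comp_eq ex_less_3 all_less_3)
  have na25: "\<not> R [True, False, True] [False, False, False]"
    using arcC[of "[True, False, True]" "[False, False, False]"] by (auto simp: comp_eq ex_less_3 all_less_3)
  have na26: "\<not> R [True, False, True] [False, True, False]"
    using arcC[of "[True, False, True]" "[False, True, False]"] by (auto simp: comp_eq ex_less_3 all_less_3)
  have na27: "\<not> R [True, False, True] [False, True, True]"
    using arcC[of "[True, False, True]" "[False, True, True]"] by (auto simp: comp_eq ex_less_3 all_less_3)
  have na28: "\<not> R [True, False, True] [True, False, True]"
    using arcC[of "[True, False, True]" "[True, False, True]"] by (auto simp: comp_eq ex_less_3 all_less_3)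
  have na29: "\<not> R [True, False, True] [True, True, False]"
    using arcC[of "[True, False, True]" "[True, True, False]"] by (auto simp: comp_eq ex_less_3 all_less_3)
  have na30: "\<not> R [True, True, False] [False, False, False]"
    using arcC[of "[True, True, False]" "[False, False, False]"] by (auto simp: comp_eq ex_less_3 all_less_3)
  have na31: "\<not> R [True, True, False] [False, False, True]"
    using arcC[of "[True, True, False]" "[False, False, True]"] by (auto simp: comp_eq ex_less_3 all_less_3)
  have na32: "\<not> R [True, True, False] [False, True, True]"
    using arcC[of "[True, True, False]" "[False, True, True]"] by (auto simp: comp_eq ex_less_3 all_less_3)
  have na33: "\<not> R [True, True, False] [True, False, True]"
    using arcC[of "[True, True, False]" "[True, False, True]"] by (auto simp: comp_eq ex_less_3 all_less_3)
  have na34: "\<not> R [True, True, False] [True, True, False]"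
    using arcC[of "[True, True, False]" "[True, True, False]"] by (auto simp: comp_eq ex_less_3 all_less_3)
  have na35: "\<not> R [True, True, True] [False, False, False]"
    using arcC[of "[True, True, True]" "[False, False, False]"] by (auto simp: comp_eq ex_less_3 all_less_3)
  have na36: "\<not> R [True, True, True] [False, False, True]"
    using arcC[of "[True, True, True]" "[False, False, True]"] by (auto simp: comp_eq ex_less_3 all_less_3)
  have na37: "\<not> R [True, True, True] [False, True, False]"
    using arcC[of "[True, True, True]" "[False, True, False]"] by (auto simp: comp_eq ex_less_3 all_less_3)
  have na38: "\<not> R [True, True, True] [True, False, False]"
    using arcC[of "[True, True, True]" "[True, False, False]"] by (auto simp: comp_eq ex_less_3 all_less_3)
  have na39: "\<not> R [True, True, True] [True, True, True]"
    using arcC[of "[True, True, True]" "[True, True, True]"] by (auto simp: comp_eq ex_less_3 all_less_3)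
  note na = na0 na1 na2 na3 na4 na5 na6 na7 na8 na9 na10 na11 na12 na13 na14 na15 na16 na17 na18 na19 na20 na21 na22 na23 na24 na25 na26 na27 na28 na29 na30 na31 na32 na33 na34 na35 na36 na37 na38 na39
  have dn0: "R [True, False, False] [False, False, False] = (\<not> R [False, False, False] [True, False, False])"
    using anti[of "[False, False, False]" "[True, False, False]"] tot[where s="[False, False, False]" and t="[True, False, False]" and i=0] by (auto simp: comp_eq all_less_3)
  have dn1: "R [True, False, True] [False, False, True] = (\<not> R [False, False, True] [True, False, True])"
    using anti[of "[False, False, True]" "[True, False, True]"] tot[where s="[False, False, True]" and t="[True, False, True]" and i=0] by (auto simp: comp_eq all_less_3)
  have dn2: "R [True, True, False] [False, True, False] = (\<not> R [False, True, False] [True, True, False])"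
    using anti[of "[False, True, False]" "[True, True, False]"] tot[where s="[False, True, False]" and t="[True, True, False]" and i=0] by (auto simp: comp_eq all_less_3)
  have dn3: "R [True, True, True] [False, True, True] = (\<not> R [False, True, True] [True, True, True])"
    using anti[of "[False, True, True]" "[True, True, True]"] tot[where s="[False, True, True]" and t="[True, True, True]" and i=0] by (auto simp: comp_eq all_less_3)
  have dn4: "R [False, True, False] [False, False, False] = (\<not> R [False, False, False] [False, True, False])"
    using anti[of "[False, False, False]" "[False, True, False]"] tot[where s="[False, False, False]" and t="[False, True, False]" and i=1] by (auto simp: comp_eq all_less_3)
  have dn5: "R [False, True, True] [False, False, True] = (\<not> R [False, False, True] [False, True, True])"
    using anti[of "[False, False, True]" "[False, True, True]"] tot[where s="[False, False, True]" and t="[False, True, True]" and i=1] by (auto simp: comp_eq all_less_3)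
  have dn6: "R [True, True, False] [True, False, False] = (\<not> R [True, False, False] [True, True, False])"
    using anti[of "[True, False, False]" "[True, True, False]"] tot[where s="[True, False, False]" and t="[True, True, False]" and i=1] by (auto simp: comp_eq all_less_3)
  have dn7: "R [True, True, True] [True, False, True] = (\<not> R [True, False, True] [True, True, True])"
    using anti[of "[True, False, True]" "[True, True, True]"] tot[where s="[True, False, True]" and t="[True, True, True]" and i=1] by (auto simp: comp_eq all_less_3)
  have dn8: "R [False, False, True] [False, False, False] = (\<not> R [False, False, False] [False, False, True])"
    using anti[of "[False, False, False]" "[False, False, True]"] tot[where s="[False, False, False]" and t="[False, False, True]" and i=2] by (auto simp: comp_eq all_less_3)
  have dn9: "R [False, True, True] [False, True, False] = (\<not> R [False, True, False] [False, True, True])"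
    using anti[of "[False, True, False]" "[False, True, True]"] tot[where s="[False, True, False]" and t="[False, True, True]" and i=2] by (auto simp: comp_eq all_less_3)
  have dn10: "R [True, False, True] [True, False, False] = (\<not> R [True, False, False] [True, False, True])"
    using anti[of "[True, False, False]" "[True, False, True]"] tot[where s="[True, False, False]" and t="[True, False, True]" and i=2] by (auto simp: comp_eq all_less_3)
  have dn11: "R [True, True, True] [True, True, False] = (\<not> R [True, True, False] [True, True, True])"
    using anti[of "[True, True, False]" "[True, True, True]"] tot[where s="[True, True, False]" and t="[True, True, True]" and i=2] by (auto simp: comp_eq all_less_3)
  have ns0: "R [False, False, False] [False, False, True] \<or> R [False, False, False] [False, True, False] \<or> R [False, False, False] [True, False, False]"
    using nosink[of "[False, False, False]"] by (auto simp: len3 na)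
  have ns1: "R [False, False, True] [False, False, False] \<or> R [False, False, True] [False, True, True] \<or> R [False, False, True] [True, False, True]"
    using nosink[of "[False, False, True]"] by (auto simp: len3 na)
  have ns2: "R [False, True, False] [False, False, False] \<or> R [False, True, False] [False, True, True] \<or> R [False, True, False] [True, True, False]"
    using nosink[of "[False, True, False]"] by (auto simp: len3 na)
  have ns3: "R [False, True, True] [False, False, True] \<or> R [False, True, True] [False, True, False] \<or> R [False, True, True] [True, True, True]"
    using nosink[of "[False, True, True]"] by (auto simp: len3 na)
  have ns4: "R [True, False, False] [False, False, False] \<or> R [True, False, False] [True, False, True] \<or> R [True, False, False] [True, True, False]"
    using nosink[of "[True, False, False]"] by (auto simp: len3 na)
  have ns5: "R [True, False, True] [False, False, True] \<or> R [True, False, True] [True, False, False] \<or> R [True, False, True] [True, True, True]"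
    using nosink[of "[True, False, True]"] by (auto simp: len3 na)
  have ns6: "R [True, True, False] [False, True, False] \<or> R [True, True, False] [True, False, False] \<or> R [True, True, False] [True, True, True]"
    using nosink[of "[True, True, False]"] by (auto simp: len3 na)
  have ns7: "R [True, True, True] [False, True, True] \<or> R [True, True, True] [True, False, True] \<or> R [True, True, True] [True, True, False]"
    using nosink[of "[True, True, True]"] by (auto simp: len3 na)
  have cy0: "\<not> (R [False, False, False] [True, False, False] \<and> R [True, False, False] [True, True, False] \<and> R [True, True, False] [False, True, False] \<and> R [False, True, False] [False, False, False])"
    using no4[of "[False, False, False]" "[True, False, False]" "[True, True, False]" "[False, True, False]"] by auto
  have cy1: "\<not> (R [False, True, False] [True, True, False] \<and> R [True, True, False] [True, False, False] \<and> R [True, False, False] [False, False, False] \<and> R [False, False, False] [False, True, False])"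
    using no4[of "[False, True, False]" "[True, True, False]" "[True, False, False]" "[False, False, False]"] by auto
  have cy2: "\<not> (R [False, False, True] [True, False, True] \<and> R [True, False, True] [True, True, True] \<and> R [True, True, True] [False, True, True] \<and> R [False, True, True] [False, False, True])"
    using no4[of "[False, False, True]" "[True, False, True]" "[True, True, True]" "[False, True, True]"] by auto
  have cy3: "\<not> (R [False, True, True] [True, True, True] \<and> R [True, True, True] [True, False, True] \<and> R [True, False, True] [False, False, True] \<and> R [False, False, True] [False, True, True])"
    using no4[of "[False, True, True]" "[True, True, True]" "[True, False, True]" "[False, False, True]"] by auto
  have cy4: "\<not> (R [False, False, False] [True, False, False] \<and> R [True, False, False] [True, False, True] \<and> R [True, False, True] [False, False, True] \<and> R [False, False, True] [False, False, False])"
    using no4[of "[False, False, False]" "[True, False, False]" "[True, False, True]" "[False, False, True]"] by auto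
  have cy5: "\<not> (R [False, False, True] [True, False, True] \<and> R [True, False, True] [True, False, False] \<and> R [True, False, False] [False, False, False] \<and> R [False, False, False] [False, False, True])"
    using no4[of "[False, False, True]" "[True, False, True]" "[True, False, False]" "[False, False, False]"] by auto
  have cy6: "\<not> (R [False, True, False] [True, True, False] \<and> R [True, True, False] [True, True, True] \<and> R [True, True, True] [False, True, True] \<and> R [False, True, True] [False, True, False])"
    using no4[of "[False, True, False]" "[True, True, False]" "[True, True, True]" "[False, True, True]"] by auto
  have cy7: "\<not> (R [False, True, True] [True, True, True] \<and> R [True, True, True] [True, True, False] \<and> R [True, True, False] [False, True, False] \<and> R [False, True, False] [False, True, True])"
    using no4[of "[False, True, True]" "[True, True, True]" "[True, True, False]" "[False, True, False]"] by auto
  have cy8: "\<not> (R [False, False, False] [False, True, False] \<and> R [False, True, False] [False, True, True] \<and> R [False, True, True] [False, False, True] \<and> R [False, False, True] [False, False, False])"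
    using no4[of "[False, False, False]" "[False, True, False]" "[False, True, True]" "[False, False, True]"] by auto
  have cy9: "\<not> (R [False, False, True] [False, True, True] \<and> R [False, True, True] [False, True, False] \<and> R [False, True, False] [False, False, False] \<and> R [False, False, False] [False, False, True])"
    using no4[of "[False, False, True]" "[False, True, True]" "[False, True, False]" "[False, False, False]"] by auto
  have cy10: "\<not> (R [True, False, False] [True, True, False] \<and> R [True, True, False] [True, True, True] \<and> R [True, True, True] [True, False, True] \<and> R [True, False, True] [True, False, False])"
    using no4[of "[True, False, False]" "[True, True, False]" "[True, True, True]" "[True, False, True]"] by auto
  have cy11: "\<not> (R [True, False, True] [True, True, True] \<and> R [True, True, True] [True, True, False] \<and> R [True, True, False] [True, False, False] \<and> R [True, False, False] [True, False, True])"
    using no4[of "[True, False, True]" "[True, True, True]" "[True, True, False]" "[True, False, False]"] by auto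
  have "(\<not> R [False, False, False] [True, False, False] \<and> \<not> R [False, False, True] [True, False, True] \<and> R [False, True, False] [True, True, False] \<and> R [False, True, True] [True, True, True] \<and> \<not> R [False, False, False] [False, True, False] \<and> R [False, False, True] [False, True, True] \<and> \<not> R [True, False, False] [True, True, False] \<and> R [True, False, True] [True, True, True] \<and> R [False, False, False] [False, False, True] \<and> R [False, True, False] [False, True, True] \<and> \<not> R [True, False, False] [True, False, True] \<and> \<not> R [True, True, False] [True, True, True]) \<or>
    (\<not> R [False, False, False] [True, False, False] \<and> \<not> R [False, False, True] [True, False, True] \<and> R [False, True, False] [True, True, False] \<and> R [False, True, True] [True, True, True] \<and> R [False, False, False] [False, True, False] \<and> \<not> R [False, False, True] [False, True, True] \<and> R [True, False, False] [True, True, False] \<and> \<not> R [True, False, True] [True, True, True] \<and> \<not> R [False, False, False] [False, False, True] \<and> \<not> R [False, True, False] [False, True, True] \<and> R [True, False, False] [True, False, True] \<and> R [True, True, False] [True, True, True]) \<or>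
    (\<not> R [False, False, False] [True, False, False] \<and> R [False, False, True] [True, False, True] \<and> \<not> R [False, True, False] [True, True, False] \<and> R [False, True, True] [True, True, True] \<and> \<not> R [False, False, False] [False, True, False] \<and> \<not> R [False, False, True] [False, True, True] \<and> R [True, False, False] [True, True, False] \<and> R [True, False, True] [True, True, True] \<and> R [False, False, False] [False, False, True] \<and> \<not> R [False, True, False] [False, True, True] \<and> R [True, False, False] [True, False, True] \<and> \<not> R [True, True, False] [True, True, True]) \<or>
    (\<not> R [False, False, False] [True, False, False] \<and> R [False, False, True] [True, False, True] \<and> \<not> R [False, True, False] [True, True, False] \<and> R [False, True, True] [True, True, True] \<and> R [False, False, False] [False, True, False] \<and> R [False, False, True] [False, True, True] \<and> \<not> R [True, False, False] [True, True, False] \<and> \<not> R [True, False, True] [True, True, True] \<and> \<not> R [False, False, False] [False, False, True] \<and> R [False, True, False] [False, True, True] \<and> \<not> R [True, False, False] [True, False, True] \<and> R [True, True, False] [True, True, True]) \<or>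
    (R [False, False, False] [True, False, False] \<and> \<not> R [False, False, True] [True, False, True] \<and> R [False, True, False] [True, True, False] \<and> \<not> R [False, True, True] [True, True, True] \<and> \<not> R [False, False, False] [False, True, False] \<and> \<not> R [False, False, True] [False, True, True] \<and> R [True, False, False] [True, True, False] \<and> R [True, False, True] [True, True, True] \<and> \<not> R [False, False, False] [False, False, True] \<and> R [False, True, False] [False, True, True] \<and> \<not> R [True, False, False] [True, False, True] \<and> R [True, True, False] [True, True, True]) \<or>
    (R [False, False, False] [True, False, False] \<and> \<not> R [False, False, True] [True, False, True] \<and> R [False, True, False] [True, True, False] \<and> \<not> R [False, True, True] [True, True, True] \<and> R [False, False, False] [False, True, False] \<and> R [False, False, True] [False, True, True] \<and> \<not> R [True, False, False] [True, True, False] \<and> \<not> R [True, False, True] [True, True, True] \<and> R [False, False, False] [False, False, True] \<and> \<not> R [False, True, False] [False, True, True] \<and> R [True, False, False] [True, False, True] \<and> \<not> R [True, True, False] [True, True, True]) \<or>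
    (R [False, False, False] [True, False, False] \<and> R [False, False, True] [True, False, True] \<and> \<not> R [False, True, False] [True, True, False] \<and> \<not> R [False, True, True] [True, True, True] \<and> \<not> R [False, False, False] [False, True, False] \<and> R [False, False, True] [False, True, True] \<and> \<not> R [True, False, False] [True, True, False] \<and> R [True, False, True] [True, True, True] \<and> \<not> R [False, False, False] [False, False, True] \<and> \<not> R [False, True, False] [False, True, True] \<and> R [True, False, False] [True, False, True] \<and> R [True, True, False] [True, True, True]) \<or>
    (R [False, False, False] [True, False, False] \<and> R [False, False, True] [True, False, True] \<and> \<not> R [False, True, False] [True, True, False] \<and> \<not> R [False, True, True] [True, True, True] \<and> R [False, False, False] [False, True, False] \<and> \<not> R [False, False, True] [False, True, True] \<and> R [True, False, False] [True, True, False] \<and> \<not> R [True, False, True] [True, True, True] \<and> R [False, False, False] [False, False, True] \<and> R [False, True, False] [False, True, True] \<and> \<not> R [True, False, False] [True, False, True] \<and> \<not> R [True, True, False] [True, True, True])"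
    using ns0 ns1 ns2 ns3 ns4 ns5 ns6 ns7 cy0 cy1 cy2 cy3 cy4 cy5 cy6 cy7 cy8 cy9 cy10 cy11 dn0 dn1 dn2 dn3 dn4 dn5 dn6 dn7 dn8 dn9 dn10 dn11 by smt
  then show ?thesis
  proof (elim disjE)
    assume c: "\<not> R [False, False, False] [True, False, False] \<and> \<not> R [False, False, True] [True, False, True] \<and> R [False, True, False] [True, True, False] \<and> R [False, True, True] [True, True, True] \<and> \<not> R [False, False, False] [False, True, False] \<and> R [False, False, True] [False, True, True] \<and> \<not> R [True, False, False] [True, True, False] \<and> R [True, False, True] [True, True, True] \<and> R [False, False, False] [False, False, True] \<and> R [False, True, False] [False, True, True] \<and> \<not> R [True, False, False] [True, False, True] \<and> \<not> R [True, True, False] [True, True, True]"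
    show ?thesis
      apply (rule exI[of _ "\<lambda>s. [s!0, s!2, \<not> s!1]"])
      using c dn0 dn1 dn2 dn3 dn4 dn5 dn6 dn7 dn8 dn9 dn10 dn11 na by (simp add: P3 bij_betw_def inj_on_def J_eq comp_eq ex_less_3 all_less_3 jordan_u_def, (auto)?)
  next
    assume c: "\<not> R [False, False, False] [True, False, False] \<and> \<not> R [False, False, True] [True, False, True] \<and> R [False, True, False] [True, True, False] \<and> R [False, True, True] [True, True, True] \<and> R [False, False, False] [False, True, False] \<and> \<not> R [False, False, True] [False, True, True] \<and> R [True, False, False] [True, True, False] \<and> \<not> R [True, False, True] [True, True, True] \<and> \<not> R [False, False, False] [False, False, True] \<and> \<not> R [False, True, False] [False, True, True] \<and> R [True, False, False] [True, False, True] \<and> R [True, True, False] [True, True, True]"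
    show ?thesis
      apply (rule exI[of _ "\<lambda>s. [s!0, \<not> s!2, \<not> s!1]"])
      using c dn0 dn1 dn2 dn3 dn4 dn5 dn6 dn7 dn8 dn9 dn10 dn11 na by (simp add: P3 bij_betw_def inj_on_def J_eq comp_eq ex_less_3 all_less_3 jordan_u_def, (auto)?)
  next
    assume c: "\<not> R [False, False, False] [True, False, False] \<and> R [False, False, True] [True, False, True] \<and> \<not> R [False, True, False] [True, True, False] \<and> R [False, True, True] [True, True, True] \<and> \<not> R [False, False, False] [False, True, False] \<and> \<not> R [False, False, True] [False, True, True] \<and> R [True, False, False] [True, True, False] \<and> R [True, False, True] [True, True, True] \<and> R [False, False, False] [False, False, True] \<and> \<not> R [False, True, False] [False, True, True] \<and> R [True, False, False] [True, False, True] \<and> \<not> R [True, True, False] [True, True, True]"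
    show ?thesis
      apply (rule exI[of _ "\<lambda>s. [s!0, \<not> s!1, \<not> s!2]"])
      using c dn0 dn1 dn2 dn3 dn4 dn5 dn6 dn7 dn8 dn9 dn10 dn11 na by (simp add: P3 bij_betw_def inj_on_def J_eq comp_eq ex_less_3 all_less_3 jordan_u_def, (auto)?)
  next
    assume c: "\<not> R [False, False, False] [True, False, False] \<and> R [False, False, True] [True, False, True] \<and> \<not> R [False, True, False] [True, True, False] \<and> R [False, True, True] [True, True, True] \<and> R [False, False, False] [False, True, False] \<and> R [False, False, True] [False, True, True] \<and> \<not> R [True, False, False] [True, True, False] \<and> \<not> R [True, False, True] [True, True, True] \<and> \<not> R [False, False, False] [False, False, True] \<and> R [False, True, False] [False, True, True] \<and> \<not> R [True, False, False] [True, False, True] \<and> R [True, True, False] [True, True, True]"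
    show ?thesis
      apply (rule exI[of _ "\<lambda>s. [s!0, s!1, \<not> s!2]"])
      using c dn0 dn1 dn2 dn3 dn4 dn5 dn6 dn7 dn8 dn9 dn10 dn11 na by (simp add: P3 bij_betw_def inj_on_def J_eq comp_eq ex_less_3 all_less_3 jordan_u_def, (auto)?)
  next
    assume c: "R [False, False, False] [True, False, False] \<and> \<not> R [False, False, True] [True, False, True] \<and> R [False, True, False] [True, True, False] \<and> \<not> R [False, True, True] [True, True, True] \<and> \<not> R [False, False, False] [False, True, False] \<and> \<not> R [False, False, True] [False, True, True] \<and> R [True, False, False] [True, True, False] \<and> R [True, False, True] [True, True, True] \<and> \<not> R [False, False, False] [False, False, True] \<and> R [False, True, False] [False, True, True] \<and> \<not> R [True, False, False] [True, False, True] \<and> R [True, True, False] [True, True, True]"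
    show ?thesis
      apply (rule exI[of _ "\<lambda>s. [s!0, \<not> s!1, s!2]"])
      using c dn0 dn1 dn2 dn3 dn4 dn5 dn6 dn7 dn8 dn9 dn10 dn11 na by (simp add: P3 bij_betw_def inj_on_def J_eq comp_eq ex_less_3 all_less_3 jordan_u_def, (auto)?)
  next
    assume c: "R [False, False, False] [True, False, False] \<and> \<not> R [False, False, True] [True, False, True] \<and> R [False, True, False] [True, True, False] \<and> \<not> R [False, True, True] [True, True, True] \<and> R [False, False, False] [False, True, False] \<and> R [False, False, True] [False, True, True] \<and> \<not> R [True, False, False] [True, True, False] \<and> \<not> R [True, False, True] [True, True, True] \<and> R [False, False, False] [False, False, True] \<and> \<not> R [False, True, False] [False, True, True] \<and> R [True, False, False] [True, False, True] \<and> \<not> R [True, True, False] [True, True, True]"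
    show ?thesis
      apply (rule exI[of _ "\<lambda>s. [s!0, s!1, s!2]"])
      using c dn0 dn1 dn2 dn3 dn4 dn5 dn6 dn7 dn8 dn9 dn10 dn11 na by (simp add: P3 bij_betw_def inj_on_def J_eq comp_eq ex_less_3 all_less_3 jordan_u_def, (auto)?)
  next
    assume c: "R [False, False, False] [True, False, False] \<and> R [False, False, True] [True, False, True] \<and> \<not> R [False, True, False] [True, True, False] \<and> \<not> R [False, True, True] [True, True, True] \<and> \<not> R [False, False, False] [False, True, False] \<and> R [False, False, True] [False, True, True] \<and> \<not> R [True, False, False] [True, True, False] \<and> R [True, False, True] [True, True, True] \<and> \<not> R [False, False, False] [False, False, True] \<and> \<not> R [False, True, False] [False, True, True] \<and> R [True, False, False] [True, False, True] \<and> R [True, True, False] [True, True, True]"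
    show ?thesis
      apply (rule exI[of _ "\<lambda>s. [s!0, \<not> s!2, s!1]"])
      using c dn0 dn1 dn2 dn3 dn4 dn5 dn6 dn7 dn8 dn9 dn10 dn11 na by (simp add: P3 bij_betw_def inj_on_def J_eq comp_eq ex_less_3 all_less_3 jordan_u_def, (auto)?)
  next
    assume c: "R [False, False, False] [True, False, False] \<and> R [False, False, True] [True, False, True] \<and> \<not> R [False, True, False] [True, True, False] \<and> \<not> R [False, True, True] [True, True, True] \<and> R [False, False, False] [False, True, False] \<and> \<not> R [False, False, True] [False, True, True] \<and> R [True, False, False] [True, True, False] \<and> \<not> R [True, False, True] [True, True, True] \<and> R [False, False, False] [False, False, True] \<and> R [False, True, False] [False, True, True] \<and> \<not> R [True, False, False] [True, False, True] \<and> \<not> R [True, True, False] [True, True, True]"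
    show ?thesis
      apply (rule exI[of _ "\<lambda>s. [s!0, s!2, s!1]"])
      using c dn0 dn1 dn2 dn3 dn4 dn5 dn6 dn7 dn8 dn9 dn10 dn11 na by (simp add: P3 bij_betw_def inj_on_def J_eq comp_eq ex_less_3 all_less_3 jordan_u_def, (auto)?)
  qed
qed


lemma sink_one:
  assumes st: "strict_game 1 S u" and fin: "finite (profiles 1 S)" and ne: "S 0 \<noteq> {}"
  shows "has_sink 1 S u"
proof -
  let ?P = "profiles 1 S"
  obtain x where "x \<in> S 0" using ne by auto
  then have "[x] \<in> ?P" by (auto simp: profiles_def)
  then have Pne: "?P \<noteq> {}" by auto
  let ?m = "Max (u 0 ` ?P)"
  have "?m \<in> u 0 ` ?P" using Pne fin by (auto intro: Max_in)
  then obtain p where p: "p \<in> ?P" "u 0 p = ?m" by auto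
  have "\<not> pref_arc 1 S u p q" for q
  proof
    assume arc: "pref_arc 1 S u p q"
    then obtain i where c: "comparable 1 S i p q" using arc_comp by blast
    then have "i = 0" "q \<in> ?P" by (auto simp: comparable_def)
    then have "u 0 q > u 0 p" "u 0 q \<le> ?m" using arc_gt[OF st c] arc fin by (auto intro: Max_ge)
    then show False using p by simp
  qed
  then show ?thesis using p by (auto simp: has_sink_def)
qed

lemma cube_case:
  assumes st: "strict_game 3 S u" and ns: "\<not> has_sink 3 S u" and n4: "\<not> has_4cycle 3 S u"
    and c2: "\<forall>i<3. finite (S i) \<and> card (S i) = 2"
  shows "iso_to_jordan 3 S u"
proof -
  let ?P = "profiles 3 S" and ?B = "profiles 3 jordan_S"
  have "\<forall>i<3. \<exists>x y. x \<noteq> y \<and> S i = {x, y}" using c2 by (metis card_2_iff)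
  then obtain a b where ab: "\<forall>i<3. a i \<noteq> b i \<and> S i = {a i, b i}" by metis
  define e where "e s = map (\<lambda>i. if s ! i then b i else a i) [0..<3]" for s :: "bool list"
  have B: "s \<in> ?B \<longleftrightarrow> length s = 3" for s by (simp add: profiles_def jordan_S_def)
  have enth: "i < 3 \<Longrightarrow> e s ! i = (if s ! i then b i else a i)" for s i by (simp add: e_def)
  have elen: "length (e s) = 3" for s by (simp add: e_def)
  have eP: "e s \<in> ?P" for s using ab by (auto simp: profiles_def enth elen)
  have ecoord: "i < 3 \<Longrightarrow> e s ! i = e t ! i \<longleftrightarrow> s ! i = t ! i" for s t i
    using ab by (auto simp: enth)
  have einj: "s \<in> ?B \<Longrightarrow> t \<in> ?B \<Longrightarrow> e s = e t \<longleftrightarrow> s = t" for s t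
  proof
    assume "s \<in> ?B" "t \<in> ?B" "e s = e t"
    then show "s = t"
    proof (intro nth_equalityI)
      show "length s = length t" using \<open>s \<in> ?B\<close> \<open>t \<in> ?B\<close> by (simp add: B)
    next
      fix i assume "i < length s"
      then show "s ! i = t ! i" using ecoord[of i s t] \<open>e s = e t\<close> \<open>s \<in> ?B\<close> by (simp add: B)
    qed
  qed auto
  have esurj: "p \<in> ?P \<Longrightarrow> \<exists>s\<in>?B. p = e s" for p
  proof -
    assume p: "p \<in> ?P"
    let ?s = "map (\<lambda>i. p ! i = b i) [0..<3]"
    have "p = e ?s" using p ab by (auto simp: profiles_def e_def intro!: nth_equalityI)
    moreover have "?s \<in> ?B" by (simp add: B)
    ultimately show ?thesis by blast
  qed
  have ebij: "bij_betw e ?B ?P"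
    unfolding bij_betw_def inj_on_def using einj eP esurj by (auto simp: image_iff)
  have ecomp: "s \<in> ?B \<Longrightarrow> t \<in> ?B \<Longrightarrow> comparable 3 S i (e s) (e t) \<longleftrightarrow> comparable 3 jordan_S i s t" for s t i
    using eP einj ecoord by (auto simp: comparable_def)
  define R where "R s t = pref_arc 3 S u (e s) (e t)" for s t
  have "\<exists>g. bij_betw g ?B ?B \<and> (\<forall>s\<in>?B. \<forall>t\<in>?B. R s t \<longleftrightarrow> pref_arc 3 jordan_S jordan_u (g s) (g t))"
  proof (rule cube_lemma)
    fix s t assume "length s = 3" "length t = 3" "R s t"
    then show "\<exists>i. comparable 3 jordan_S i s t" using ecomp arc_comp by (metis B R_def)
  next
    fix s t assume "length s = 3" "length t = 3" "R s t"
    then show "\<not> R t s" using arc_anti[OF st] by (auto simp: R_def)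
  next
    fix s t i assume c: "comparable 3 jordan_S i s t"
    then have st': "s \<in> ?B" "t \<in> ?B" by (auto simp: comparable_def)
    then have c': "comparable 3 S i (e s) (e t)" using ecomp c by simp
    show "R s t \<or> R t s" using arc_gt[OF st c'] arc_gt[OF st comp_sym[OF c']]
      c' st unfolding R_def strict_game_def by fastforce
  next
    fix s :: "bool list" assume "length s = 3"
    obtain q where arc: "pref_arc 3 S u (e s) q" using ns eP by (auto simp: has_sink_def)
    then have "q \<in> ?P" by (auto simp: pref_arc_def comparable_def)
    then obtain t where "t \<in> ?B" "q = e t" using esurj by blast
    then show "\<exists>t. length t = 3 \<and> R s t" using arc by (auto simp: R_def B)
  next
    fix w x y z assume d: "distinct [w, x, y, z]" "length w = 3" "length x = 3" "length y = 3" "length z = 3"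
      and arcs: "R w x" "R x y" "R y z" "R z w"
    have "distinct [e w, e x, e y, e z]" using d einj by (auto simp: B)
    then show False using n4 arcs unfolding has_4cycle_def R_def by blast
  qed
  then obtain g where g: "bij_betw g ?B ?B" "\<forall>s\<in>?B. \<forall>t\<in>?B. R s t \<longleftrightarrow> pref_arc 3 jordan_S jordan_u (g s) (g t)"
    by blast
  define f where "f = g \<circ> inv_into ?B e"
  have fb: "bij_betw f ?P ?B" unfolding f_def
    using bij_betw_trans[OF bij_betw_inv_into[OF ebij] g(1)] .
  have "pref_arc 3 S u p q \<longleftrightarrow> pref_arc 3 jordan_S jordan_u (f p) (f q)" if "p \<in> ?P" "q \<in> ?P" for p q
  proof -
    have "inv_into ?B e p \<in> ?B" "inv_into ?B e q \<in> ?B"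
      using that ebij by (auto simp: bij_betw_def inv_into_into)
    moreover have "e (inv_into ?B e p) = p" "e (inv_into ?B e q) = q"
      using that ebij by (auto simp: bij_betw_def f_inv_into_f)
    ultimately show ?thesis using g(2) unfolding f_def R_def by force
  qed
  then show ?thesis unfolding iso_to_jordan_def using fb by blast
qed

theorem mainTheorem2:
  fixes N :: nat and S :: "nat \<Rightarrow> 'a set" and u :: "nat \<Rightarrow> 'a list \<Rightarrow> real"
  assumes "\<forall>i<N. finite (S i) \<and> card (S i) \<ge> 2"
    and "strict_game N S u"
    and "\<not> has_sink N S u"
    and "\<not> has_4cycle N S u"
  shows "card (profiles N S) \<ge> 8 \<and>
    (card (profiles N S) = 8 \<longrightarrow>
       N = 3 \<and> (\<forall>i<3. card (S i) = 2) \<and> iso_to_jordan N S u)"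
proof -
  have fin: "\<forall>i<N. finite (S i)" using assms(1) by blast
  have fP: "finite (profiles N S)" and cP: "card (profiles N S) = (\<Prod>i<N. card (S i))"
    using profiles_card[OF fin] by auto
  have ne: "S i \<noteq> {}" if "i < N" for i using assms(1) that by fastforce
  consider "N = 0" | "N = 1" | "N = 2" | "N = 3" | "N \<ge> 4" by linarith
  then show ?thesis
  proof cases
    case 1
    have "[] \<in> profiles N S" using 1 by (simp add: profiles_def)
    moreover have "\<not> pref_arc N S u [] q" for q using 1 by (auto simp: pref_arc_def comparable_def)
    ultimately show ?thesis using assms(3) by (auto simp: has_sink_def)
  next
    case 2
    then show ?thesis using sink_one[of S u] assms(2,3) fP ne by auto
  next
    case 3
    have c: "card (profiles N S) = card (S 0) * card (S 1)" using cP 3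
      by (simp add: numeral_2_eq_2)
    show ?thesis
    proof (cases "card (S 0) = 2 \<or> card (S 1) = 2")
      case True
      then have "has_4cycle 2 S u"
      proof
        assume h: "card (S 0) = 2"
        then obtain x y where "S 0 = {x, y}" "x \<noteq> y" by (metis card_2_iff)
        then show ?thesis using two_by_m[of S u 0 x y 1] assms(2,3) fP ne 3 by auto
      next
        assume h: "card (S 1) = 2"
        then obtain x y where "S 1 = {x, y}" "x \<noteq> y" by (metis card_2_iff)
        then show ?thesis using two_by_m[of S u 1 x y 0] assms(2,3) fP ne 3 by auto
      qed
      then show ?thesis using assms(4) 3 by simp
    next
      case False
      have "card (S 0) \<ge> 2" "card (S 1) \<ge> 2" using assms(1) 3 by auto
      then have "card (S 0) \<ge> 3" "card (S 1) \<ge> 3" using False by auto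
      then have "card (S 0) * card (S 1) \<ge> 3 * 3" by (intro mult_le_mono)
      then show ?thesis using c by simp
    qed
  next
    case 4
    have c: "card (profiles N S) = card (S 0) * card (S 1) * card (S 2)" using cP 4
      by (simp add: numeral_3_eq_3 numeral_2_eq_2 mult.commute mult.left_commute)
    have g: "card (S 0) \<ge> 2" "card (S 1) \<ge> 2" "card (S 2) \<ge> 2" using assms(1) 4 by auto
    show ?thesis
    proof (cases "\<forall>i<3. card (S i) = 2")
      case True
      have "card (profiles N S) = 8" using c True by auto
      moreover have "iso_to_jordan N S u" using cube_case[of S u] assms 4 True by auto
      ultimately show ?thesis using 4 True by simp
    next
      case False
      then obtain i where i: "i < 3" "card (S i) \<ge> 3" using assms(1) 4 by fastforce
      have "card (S 0) * card (S 1) * card (S 2) \<ge> 12"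
      proof -
        have "i = 0 \<or> i = 1 \<or> i = 2" using i(1) by auto
        with i consider "card (S 0) \<ge> 3" | "card (S 1) \<ge> 3" | "card (S 2) \<ge> 3"
          by auto
        then show ?thesis
        proof cases
          case 1 then have "card (S 0) * card (S 1) * card (S 2) \<ge> 3 * 2 * 2"
            using g by (intro mult_le_mono) auto
          then show ?thesis by simp
        next
          case 2 then have "card (S 0) * card (S 1) * card (S 2) \<ge> 2 * 3 * 2"
            using g by (intro mult_le_mono) auto
          then show ?thesis by simp
        next
          case 3 then have "card (S 0) * card (S 1) * card (S 2) \<ge> 2 * 2 * 3"
            using g by (intro mult_le_mono) auto
          then show ?thesis by simp
        qed
      qed
      then show ?thesis using c by simp
    qed
  next
    case 5
    have "(\<Prod>i<N. (2::nat)) \<le> (\<Prod>i<N. card (S i))"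
      using assms(1) by (intro prod_mono) auto
    moreover have "(2::nat) ^ 4 \<le> 2 ^ N" using 5 by (intro power_increasing) auto
    ultimately have "card (profiles N S) \<ge> 16" using cP by simp
    then show ?thesis by simp
  qed
qed

end
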